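(* There exist an environment $E$ and a total preorder $\succeq$ on $\Pi^E$ such that $\succeq\in\mathrm{Ord}_{\mathrm{MR}}(E)\cap\mathrm{Ord}_{\mathrm{LTL}}(E)$ but $\succeq\notin\mathrm{Ord}_{\mathrm{LAR}}(E)$.
   Context: An environment is a tuple $E=(\mathcal S,\mathcal A,\mathcal T,\mathcal I)$ where $\mathcal S,\mathcal A$ are finite nonempty sets, $\mathcal T:\mathcal S\times\mathcal A\to\Delta(\mathcal S)$ and $\mathcal I\in\Delta(\mathcal S)$. A policy is a map $\pi:\mathcal S\to\Delta(\mathcal A)$ (stationary, possibly stochastic); $\Pi^E$ denotes the set of all policies. A trajectory $\xi=(s_0,a_0,s_1,a_1,\dots)\in\Xi:=\mathcal S\times(\mathcal A\times\mathcal S)^\omega$ is generated under $\pi$ by $s_0\sim\mathcal I$, $a_t\sim\pi(s_t)$, $s_{t+1}\sim\mathcal T(s_t,a_t)$; $\mathbb E^\pi_\xi$ denotes expectation under this distribution. An objective-specification formalism $X$ assigns to each environment $E$ a set of objective specifications, each inducing a total preorder $\succeq$ on $\Pi^E$; $\mathrm{Ord}_X(E)$ is the set of total preorders so induced. A specification defining a scalar $J:\Pi^E\to\mathbb R$ induces $\pi_1\succeq\pi_2\iff J(\pi_1)\ge J(\pi_2)$. MR: specification $(\mathcal R,\gamma)$, $\mathcal R:\mathcal S\times\mathcal A\times\mathcal S\to\mathbb R$, $\gamma\in[0,1)$, $J(\pi)=\mathbb E^\pi_\xi[\sum_{t=0}^\infty\gamma^t\mathcal R(s_t,a_t,s_{t+1})]$.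 LAR: specification $(\mathcal R)$, $\mathcal R:\mathcal S\times\mathcal A\times\mathcal S\to\mathbb R$, $J(\pi)=\lim_{N\to\infty}\frac1N\mathbb E^\pi_\xi[\sum_{t=0}^{N-1}\mathcal R(s_t,a_t,s_{t+1})]$. LTL: specification $(\varphi)$ with $\varphi$ a linear temporal logic formula whose atomic propositions are the transitions $(s,a,s')\in\mathcal S\times\mathcal A\times\mathcal S$, built with $\neg,\lor,\land,\to$ and the temporal operators $\bigcirc$ (next), $\square$ (always), $\lozenge$ (eventually), $\mathcal U$ (until). Semantics on a trajectory $\xi$ at time $t$: an atomic proposition $(s,a,s')$ holds iff $(s_t,a_t,s_{t+1})=(s,a,s')$; $\bigcirc\psi$ holds iff $\psi$ holds at $t+1$; $\square\psi$ iff $\psi$ holds at every $t'\ge t$; $\lozenge\psi$ iff $\psi$ holds at some $t'\ge t$; $\psi\,\mathcal U\,\chi$ iff there is $t'\ge t$ with $\chi$ holding at $t'$ and $\psi$ holding at every $t''$ with $t\le t''<t'$; Boolean connectives as usual. $\varphi(\xi)=1$ if $\varphi$ holds at time $0$ and $0$ otherwise; $J(\pi)=\mathbb E^\pi_\xi[\varphi(\xi)]$. *)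

theory Defs
  imports "HOL-Probability.Probability"
begin

text \<open>States and actions are encoded as natural numbers; an environment carries
  its finite nonempty state set S and action set A explicitly.  Distributions
  in Delta(X) are pmfs supported in X.\<close>

record env =
  St :: "nat set"
  Ac :: "nat set"
  Tr :: "nat \<Rightarrow> nat \<Rightarrow> nat pmf"
  Init :: "nat pmf"

definition wf_env :: "env \<Rightarrow> bool" where
  "wf_env E \<longleftrightarrow> finite (St E) \<and> St E \<noteq> {} \<and> finite (Ac E) \<and> Ac E \<noteq> {}
     \<and> set_pmf (Init E) \<subseteq> St E
     \<and> (\<forall>s\<in>St E. \<forall>a\<in>Ac E. set_pmf (Tr E s a) \<subseteq> St E)"

text \<open>Policies S -> Delta(A).  Values outside S are irrelevant and fixed to a
  dummy value so that policies correspond exactly to maps on S.\<close>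

definition policies :: "env \<Rightarrow> (nat \<Rightarrow> nat pmf) set" where
  "policies E = {\<pi>. (\<forall>s\<in>St E. set_pmf (\<pi> s) \<subseteq> Ac E) \<and> (\<forall>s. s \<notin> St E \<longrightarrow> \<pi> s = return_pmf 0)}"

text \<open>A trajectory s0,a0,s1,a1,... is represented as the stream of pairs (s_t,a_t).
  The probability that the trajectory starts with a given finite prefix:\<close>

fun pref_cont :: "env \<Rightarrow> (nat \<Rightarrow> nat pmf) \<Rightarrow> nat \<Rightarrow> nat \<Rightarrow> (nat \<times> nat) list \<Rightarrow> real" where
  "pref_cont E \<pi> s a [] = pmf (\<pi> s) a"
| "pref_cont E \<pi> s a ((s', a') # xs) = pmf (\<pi> s) a * pmf (Tr E s a) s' * pref_cont E \<pi> s' a' xs"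

fun pref_prob :: "env \<Rightarrow> (nat \<Rightarrow> nat pmf) \<Rightarrow> (nat \<times> nat) list \<Rightarrow> real" where
  "pref_prob E \<pi> [] = 1"
| "pref_prob E \<pi> ((s, a) # xs) = pmf (Init E) s * pref_cont E \<pi> s a xs"

definition traj :: "env \<Rightarrow> (nat \<Rightarrow> nat pmf) \<Rightarrow> (nat \<times> nat) stream measure" where
  "traj E \<pi> = (THE M. prob_space M \<and> sets M = sets (stream_space (count_space UNIV))
      \<and> (\<forall>xs. emeasure M {\<omega> \<in> space M. stake (length xs) \<omega> = xs} = ennreal (pref_prob E \<pi> xs)))"

definition trans_at :: "(nat \<times> nat) stream \<Rightarrow> nat \<Rightarrow> nat \<times> nat \<times> nat" where
  "trans_at \<omega> t = (fst (\<omega> !! t), snd (\<omega> !! t), fst (\<omega> !! Suc t))"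

definition J_MR :: "env \<Rightarrow> (nat \<Rightarrow> nat \<Rightarrow> nat \<Rightarrow> real) \<Rightarrow> real \<Rightarrow> (nat \<Rightarrow> nat pmf) \<Rightarrow> real" where
  "J_MR E R \<gamma> \<pi> = (\<integral>\<omega>. (\<Sum>t. \<gamma> ^ t * (case trans_at \<omega> t of (s, a, s') \<Rightarrow> R s a s')) \<partial>traj E \<pi>)"

definition J_LAR :: "env \<Rightarrow> (nat \<Rightarrow> nat \<Rightarrow> nat \<Rightarrow> real) \<Rightarrow> (nat \<Rightarrow> nat pmf) \<Rightarrow> real" where
  "J_LAR E R \<pi> = lim (\<lambda>N. (1 / real N) *
      (\<integral>\<omega>. (\<Sum>t<N. (case trans_at \<omega> t of (s, a, s') \<Rightarrow> R s a s')) \<partial>traj E \<pi>))"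

datatype ltl =
    Atom "nat \<times> nat \<times> nat"
  | LNot ltl
  | LOr ltl ltl
  | LAnd ltl ltl
  | LImp ltl ltl
  | LNext ltl
  | LAlways ltl
  | LEventually ltl
  | LUntil ltl ltl

fun ltl_atoms :: "ltl \<Rightarrow> (nat \<times> nat \<times> nat) set" where
  "ltl_atoms (Atom p) = {p}"
| "ltl_atoms (LNot f) = ltl_atoms f"
| "ltl_atoms (LOr f g) = ltl_atoms f \<union> ltl_atoms g"
| "ltl_atoms (LAnd f g) = ltl_atoms f \<union> ltl_atoms g"
| "ltl_atoms (LImp f g) = ltl_atoms f \<union> ltl_atoms g"
| "ltl_atoms (LNext f) = ltl_atoms f"
| "ltl_atoms (LAlways f) = ltl_atoms f"
| "ltl_atoms (LEventually f) = ltl_atoms f"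
| "ltl_atoms (LUntil f g) = ltl_atoms f \<union> ltl_atoms g"

fun ltl_holds :: "(nat \<times> nat) stream \<Rightarrow> nat \<Rightarrow> ltl \<Rightarrow> bool" where
  "ltl_holds \<omega> t (Atom p) \<longleftrightarrow> trans_at \<omega> t = p"
| "ltl_holds \<omega> t (LNot f) \<longleftrightarrow> \<not> ltl_holds \<omega> t f"
| "ltl_holds \<omega> t (LOr f g) \<longleftrightarrow> ltl_holds \<omega> t f \<or> ltl_holds \<omega> t g"
| "ltl_holds \<omega> t (LAnd f g) \<longleftrightarrow> ltl_holds \<omega> t f \<and> ltl_holds \<omega> t g"
| "ltl_holds \<omega> t (LImp f g) \<longleftrightarrow> (ltl_holds \<omega> t f \<longrightarrow> ltl_holds \<omega> t g)"
| "ltl_holds \<omega> t (LNext f) \<longleftrightarrow> ltl_holds \<omega> (Suc t) f"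
| "ltl_holds \<omega> t (LAlways f) \<longleftrightarrow> (\<forall>t'\<ge>t. ltl_holds \<omega> t' f)"
| "ltl_holds \<omega> t (LEventually f) \<longleftrightarrow> (\<exists>t'\<ge>t. ltl_holds \<omega> t' f)"
| "ltl_holds \<omega> t (LUntil f g) \<longleftrightarrow>
     (\<exists>t'\<ge>t. ltl_holds \<omega> t' g \<and> (\<forall>t''. t \<le> t'' \<and> t'' < t' \<longrightarrow> ltl_holds \<omega> t'' f))"

definition J_LTL :: "env \<Rightarrow> ltl \<Rightarrow> (nat \<Rightarrow> nat pmf) \<Rightarrow> real" where
  "J_LTL E \<phi> \<pi> = measure (traj E \<pi>) {\<omega> \<in> space (traj E \<pi>). ltl_holds \<omega> 0 \<phi>}"

definition ord_of :: "env \<Rightarrow> ((nat \<Rightarrow> nat pmf) \<Rightarrow> real) \<Rightarrow> (nat \<Rightarrow> nat pmf) rel" where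
  "ord_of E J = {(\<pi>1, \<pi>2). \<pi>1 \<in> policies E \<and> \<pi>2 \<in> policies E \<and> J \<pi>1 \<ge> J \<pi>2}"

definition Ord_MR :: "env \<Rightarrow> (nat \<Rightarrow> nat pmf) rel set" where
  "Ord_MR E = {ord_of E (J_MR E R \<gamma>) | R \<gamma>. 0 \<le> \<gamma> \<and> \<gamma> < 1}"

definition Ord_LAR :: "env \<Rightarrow> (nat \<Rightarrow> nat pmf) rel set" where
  "Ord_LAR E = {ord_of E (J_LAR E R) | R. True}"

definition Ord_LTL :: "env \<Rightarrow> (nat \<Rightarrow> nat pmf) rel set" where
  "Ord_LTL E = {ord_of E (J_LTL E \<phi>) | \<phi>. ltl_atoms \<phi> \<subseteq> St E \<times> Ac E \<times> St E}"

definition total_preorder_on :: "'a set \<Rightarrow> 'a rel \<Rightarrow> bool" where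
  "total_preorder_on X r \<longleftrightarrow> r \<subseteq> X \<times> X \<and> refl_on X r \<and> trans r \<and> total_on X r"

end

theory Submission
  imports Defs
begin

abbreviation SS :: "(nat \<times> nat) stream measure" where
  "SS \<equiv> stream_space (count_space UNIV)"

definition E0 :: env where
  "E0 = \<lparr>St = {0,1}, Ac = {0,1}, Tr = (\<lambda>s a. return_pmf 1), Init = return_pmf 0\<rparr>"

definition str :: "(nat \<Rightarrow> nat) \<Rightarrow> nat \<Rightarrow> (nat \<times> nat) stream" where
  "str d s = (s, d s) ## sconst (1, d 1)"

lemma space_SS[simp]: "space SS = UNIV"
  by (simp add: space_stream_space)

lemma sstart_UNIV: "sstart UNIV xs = {\<omega>. stake (length xs) \<omega> = xs}"
proof (induction xs)
  case Nil thus ?case by simp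
next
  case (Cons x xs)
  show ?case
  proof (rule set_eqI)
    fix \<omega> :: "'a stream"
    show "\<omega> \<in> sstart UNIV (x # xs) \<longleftrightarrow> \<omega> \<in> {\<omega>. stake (length (x # xs)) \<omega> = x # xs}"
      using Cons by (cases \<omega>) auto
  qed
qed

lemma traj_unique:
  assumes P: "prob_space M" and S: "sets M = sets SS"
    and C: "\<And>xs. emeasure M {\<omega> \<in> space M. stake (length xs) \<omega> = xs} = ennreal (pref_prob E \<pi> xs)"
  shows "traj E \<pi> = M"
  unfolding traj_def
proof (rule the_equality)
  show "prob_space M \<and> sets M = sets SS \<and>
    (\<forall>xs. emeasure M {\<omega> \<in> space M. stake (length xs) \<omega> = xs} = ennreal (pref_prob E \<pi> xs))"
    using P S C by auto
next
  fix N assume N: "prob_space N \<and> sets N = sets SS \<and>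
    (\<forall>xs. emeasure N {\<omega> \<in> space N. stake (length xs) \<omega> = xs} = ennreal (pref_prob E \<pi> xs))"
  have spM: "space M = UNIV" using sets_eq_imp_space_eq[OF S] by simp
  have spN: "space N = UNIV" using sets_eq_imp_space_eq[of N SS] N by simp
  show "N = M"
  proof (rule stream_space_eq_sstart[of "UNIV :: (nat \<times> nat) set"])
    show "countable (UNIV :: (nat \<times> nat) set)" by simp
    show "prob_space N" using N by simp
    show "prob_space M" using P .
    show "AE x in N. x \<in> streams UNIV" by simp
    show "AE x in M. x \<in> streams UNIV" by simp
    show "sets N = sets SS" using N by simp
    show "sets M = sets SS" using S .
    fix xs :: "(nat \<times> nat) list"
    show "emeasure N (sstart UNIV xs) = emeasure M (sstart UNIV xs)"
      using N C[of xs] spM spN by (simp add: sstart_UNIV)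
  qed
qed

lemma stake_sconst': "stake n (sconst x) = replicate n x"
  by (simp add: map_replicate_const)

lemma stake_str: "stake (Suc n) (str d s) = (s, d s) # replicate n (1, d 1)"
  by (simp add: str_def map_replicate_const)

lemma E0_simps[simp]: "St E0 = {0,1}" "Ac E0 = {0,1}" "Tr E0 s a = return_pmf 1" "Init E0 = return_pmf 0"
  by (simp_all add: E0_def)

lemma pref_cont_det:
  "pref_cont E0 (\<lambda>s. return_pmf (d s)) s a xs =
     (if a = d s \<and> xs = replicate (length xs) (1, d 1) then 1 else 0)"
proof (induction xs arbitrary: s a)
  case Nil
  then show ?case by (auto simp: pmf_return)
next
  case (Cons y xs)
  obtain s' a' where y: "y = (s', a')" by force
  have "pref_cont E0 (\<lambda>s. return_pmf (d s)) s a (y # xs)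
      = pmf (return_pmf (d s)) a * pmf (return_pmf 1) s' *
        (if a' = d s' \<and> xs = replicate (length xs) (1, d 1) then 1 else 0)"
    using Cons y by simp
  also have "\<dots> = (if a = d s \<and> y # xs = replicate (length (y # xs)) (1, d 1) then 1 else 0)"
    using y by (auto simp: pmf_return indicator_def)
  finally show ?case .
qed

lemma pref_prob_det:
  "pref_prob E0 (\<lambda>s. return_pmf (d s)) xs =
     (if stake (length xs) (str d 0) = xs then 1 else 0)"
proof (cases xs)
  case Nil thus ?thesis by simp
next
  case (Cons y ys)
  obtain s a where y: "y = (s, a)" by force
  have st: "stake (length xs) (str d 0) = (0, d 0) # replicate (length ys) (1, d 1)"
    using Cons stake_str[of "length ys" d 0] by simp
  show ?thesis unfolding st using Cons y
    by (cases "s = 0") (auto simp: pref_cont_det pmf_return indicator_def)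
qed

lemma traj_det: "traj E0 (\<lambda>s. return_pmf (d s)) = return SS (str d 0)"
proof (rule traj_unique)
  show "prob_space (return SS (str d 0))" by (rule prob_space_return) simp
  show "sets (return SS (str d 0)) = sets SS" by simp
  fix xs :: "(nat \<times> nat) list"
  have "{\<omega> \<in> space (return SS (str d 0)). stake (length xs) \<omega> = xs} = sstart UNIV xs"
    by (simp add: sstart_UNIV)
  moreover have "sstart UNIV xs \<in> sets SS" by (rule sets_sstart)
  ultimately show "emeasure (return SS (str d 0)) {\<omega> \<in> space (return SS (str d 0)). stake (length xs) \<omega> = xs}
      = ennreal (pref_prob E0 (\<lambda>s. return_pmf (d s)) xs)"
    by (simp add: pref_prob_det sstart_UNIV indicator_def)
qed

lemma meas_stake: "(\<lambda>\<omega>. (h :: (nat \<times> nat) list \<Rightarrow> real) (stake n \<omega>)) \<in> borel_measurable SS"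
  by (rule measurable_compose[OF measurable_stake]) simp

lemma snth_str: "str d s !! 0 = (s, d s)" "str d s !! Suc t = (1, d 1)"
  by (simp_all add: str_def)

lemma integral_det_sum:
  fixes R :: "nat \<Rightarrow> nat \<Rightarrow> nat \<Rightarrow> real"
  shows "(\<integral>\<omega>. (\<Sum>t<N. (case trans_at \<omega> t of (s, a, s') \<Rightarrow> R s a s')) \<partial>return SS \<omega>0)
   = (\<Sum>t<N. (case trans_at \<omega>0 t of (s, a, s') \<Rightarrow> R s a s'))"
proof -
  define H where "H = (\<lambda>l :: (nat \<times> nat) list. (\<Sum>t<N. R (fst (l!t)) (snd (l!t)) (fst (l!Suc t))))"
  have eq: "(\<lambda>\<omega>. (\<Sum>t<N. (case trans_at \<omega> t of (s, a, s') \<Rightarrow> R s a s'))) = (\<lambda>\<omega>. H (stake (Suc N) \<omega>))"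
    by (rule ext) (auto simp: H_def trans_at_def stake_nth simp del: stake.simps intro!: sum.cong)
  have "(\<integral>\<omega>. H (stake (Suc N) \<omega>) \<partial>return SS \<omega>0) = H (stake (Suc N) \<omega>0)"
    using integral_return[of \<omega>0 SS "\<lambda>\<omega>. H (stake (Suc N) \<omega>)"] by (simp add: meas_stake)
  then show ?thesis unfolding eq using fun_cong[OF eq, of \<omega>0] by simp
qed

lemma J_LAR_det: "J_LAR E0 R (\<lambda>s. return_pmf (d s)) = R 1 (d 1) 1"
proof -
  define r where "r = R 0 (d 0) 1"
  define c where "c = R 1 (d 1) 1"
  have S: "(\<Sum>t<Suc n. (case trans_at (str d 0) t of (s, a, s') \<Rightarrow> R s a s')) = r + real n * c" for n
  proof (induction n)
    case 0 thus ?case by (simp add: trans_at_def str_def r_def)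
  next
    case (Suc n)
    thus ?case by (simp add: trans_at_def str_def c_def algebra_simps)
  qed
  have T: "(\<lambda>n. c + (r - c) / real (Suc n)) \<longlonglongrightarrow> c"
    using tendsto_add[OF tendsto_const[of c] LIMSEQ_Suc[OF lim_const_over_n[of "r - c"]]] by simp
  have "(\<lambda>N. (1 / real N) * (\<Sum>t<N. (case trans_at (str d 0) t of (s, a, s') \<Rightarrow> R s a s'))) \<longlonglongrightarrow> c"
  proof (rule LIMSEQ_imp_Suc)
    have "(1 / real (Suc n)) * (\<Sum>t<Suc n. (case trans_at (str d 0) t of (s, a, s') \<Rightarrow> R s a s'))
        = c + (r - c) / real (Suc n)" for n
      unfolding S by (simp add: field_simps)
    then show "(\<lambda>n. (1 / real (Suc n)) * (\<Sum>t<Suc n. (case trans_at (str d 0) t of (s, a, s') \<Rightarrow> R s a s'))) \<longlonglongrightarrow> c"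
      using T by simp
  qed
  then show ?thesis
    unfolding J_LAR_def traj_det integral_det_sum c_def by (rule limI)
qed

definition phi0 :: ltl where "phi0 = Atom (0, 1, 1)"

definition Rmr :: "nat \<Rightarrow> nat \<Rightarrow> nat \<Rightarrow> real" where
  "Rmr s a s' = (if (s, a, s') = (0, 1, 1) then 1 else 0)"

lemma J_MR_eq: "J_MR E0 Rmr 0 \<pi> = J_LTL E0 phi0 \<pi>"
proof -
  have eq: "(\<lambda>\<omega>. (\<Sum>t. (0::real) ^ t * (case trans_at \<omega> t of (s, a, s') \<Rightarrow> Rmr s a s')))
     = indicator {\<omega>. trans_at \<omega> 0 = (0, 1, 1)}"
  proof (rule ext)
    fix \<omega>
    have "(\<Sum>t. (0::real) ^ t * (case trans_at \<omega> t of (s, a, s') \<Rightarrow> Rmr s a s'))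
        = (\<Sum>t\<in>{0}. (0::real) ^ t * (case trans_at \<omega> t of (s, a, s') \<Rightarrow> Rmr s a s'))"
      by (rule suminf_finite) auto
    also have "\<dots> = indicator {\<omega>. trans_at \<omega> 0 = (0, 1, 1)} \<omega>"
      by (cases "trans_at \<omega> 0") (auto simp: Rmr_def indicator_def)
    finally show "(\<Sum>t. (0::real) ^ t * (case trans_at \<omega> t of (s, a, s') \<Rightarrow> Rmr s a s'))
        = indicator {\<omega>. trans_at \<omega> 0 = (0, 1, 1)} \<omega>" .
  qed
  show ?thesis
    unfolding J_MR_def J_LTL_def eq integral_indicator phi0_def
    by (simp add: Int_def conj_commute)
qed

lemma A_sets: "{\<omega>. trans_at \<omega> 0 = (0, 1, 1)} \<in> sets SS"
proof -
  have "{\<omega>. trans_at \<omega> 0 = (0, 1, 1)} =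
      (\<lambda>\<omega>. stake 2 \<omega>) -` {l. (fst (l!0), snd (l!0), fst (l!1)) = (0, 1, 1)} \<inter> space SS"
    by (auto simp: trans_at_def numeral_2_eq_2)
  also have "\<dots> \<in> sets SS"
    by (rule measurable_sets[OF measurable_stake]) simp
  finally show ?thesis .
qed

lemma J_LTL_det: "J_LTL E0 phi0 (\<lambda>s. return_pmf (d s)) = (if d 0 = 1 then 1 else 0)"
proof -
  have "J_LTL E0 phi0 (\<lambda>s. return_pmf (d s)) = measure (return SS (str d 0)) {\<omega>. trans_at \<omega> 0 = (0, 1, 1)}"
    unfolding J_LTL_def traj_det phi0_def by simp
  also have "\<dots> = indicator {\<omega>. trans_at \<omega> 0 = (0, 1, 1)} (str d 0)"
    by (rule measure_return[OF A_sets])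
  also have "\<dots> = (if d 0 = 1 then 1 else 0)"
    by (simp add: trans_at_def str_def indicator_def)
  finally show ?thesis .
qed

lemma tp_ord_of: "total_preorder_on (policies E) (ord_of E J)"
  unfolding total_preorder_on_def ord_of_def refl_on_def trans_def total_on_def
  by auto

theorem mainTheorem9:
  shows "\<exists>E ord. wf_env E \<and> total_preorder_on (policies E) ord
           \<and> ord \<in> Ord_MR E \<and> ord \<in> Ord_LTL E \<and> ord \<notin> Ord_LAR E"
proof (intro exI conjI)
  show "wf_env E0" by (simp add: wf_env_def)
  show "total_preorder_on (policies E0) (ord_of E0 (J_LTL E0 phi0))" by (rule tp_ord_of)
  have "ord_of E0 (J_LTL E0 phi0) = ord_of E0 (J_MR E0 Rmr 0)"
  proof -
    have "J_MR E0 Rmr 0 = J_LTL E0 phi0" by (rule ext) (rule J_MR_eq)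
    then show ?thesis by simp
  qed
  then show "ord_of E0 (J_LTL E0 phi0) \<in> Ord_MR E0"
    unfolding Ord_MR_def by (intro CollectI exI[of _ Rmr] exI[of _ "0::real"]) simp
  show "ord_of E0 (J_LTL E0 phi0) \<in> Ord_LTL E0"
    unfolding Ord_LTL_def by (intro CollectI exI[of _ phi0]) (simp add: phi0_def)
  show "ord_of E0 (J_LTL E0 phi0) \<notin> Ord_LAR E0"
  proof
    assume "ord_of E0 (J_LTL E0 phi0) \<in> Ord_LAR E0"
    then obtain R where R: "ord_of E0 (J_LTL E0 phi0) = ord_of E0 (J_LAR E0 R)"
      unfolding Ord_LAR_def by auto
    define da :: "nat \<Rightarrow> nat" where "da s = (if s = 0 then 1 else 0)" for s
    define db :: "nat \<Rightarrow> nat" where "db s = 0" for s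
    have pa: "(\<lambda>s. return_pmf (da s)) \<in> policies E0"
      by (auto simp: policies_def da_def)
    have pb: "(\<lambda>s. return_pmf (db s)) \<in> policies E0"
      by (auto simp: policies_def db_def)
    have "((\<lambda>s. return_pmf (db s)), (\<lambda>s. return_pmf (da s))) \<in> ord_of E0 (J_LAR E0 R)"
      using pa pb by (simp add: ord_of_def J_LAR_det da_def db_def)
    then have "((\<lambda>s. return_pmf (db s)), (\<lambda>s. return_pmf (da s))) \<in> ord_of E0 (J_LTL E0 phi0)"
      using R by simp
    then show False
      by (simp add: ord_of_def J_LTL_det da_def db_def)
  qed
qed

end
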